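(* Let $\Lambda=\mathrm{diag}(\lambda_1,\dots,\lambda_n)$ with $\lambda_1<\dots<\lambda_n$ and let $f:\mathbb{R}\to\mathbb{R}$ satisfy $f(\lambda_i)\neq 0$ for all $i$ and $|f(\lambda_i)|\neq|f(\lambda_j)|$ for $i\neq j$. Let $F:\mathcal{T}_\Lambda\to\mathcal{T}_\Lambda$ be the QR step induced by $f$. Let $\mathcal{K}\subset\mathcal{T}_\Lambda$ be a compact set containing no diagonal matrices. Then there exists $K>0$ such that for all $T\in\mathcal{T}_\Lambda$, $$\#\{k\in\mathbb{N} : F^k(T)\in\mathcal{K}\}<K.$$
   Context: $\mathcal{T}_\Lambda$ denotes the set of real symmetric tridiagonal $n\times n$ matrices with spectrum $\{\lambda_1,\dots,\lambda_n\}$. For an invertible real matrix $A$, write uniquely $A=\mathbf{Q}(A)\mathbf{R}(A)$ with $\mathbf{Q}(A)$ orthogonal and $\mathbf{R}(A)$ upper triangular with positive diagonal. The QR step induced by $f$ is $F(T)=\mathbf{Q}(f(T))^{*}\,T\,\mathbf{Q}(f(T))$, where $f(T)$ is defined by functional calculus. *)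

theory Defs
  imports "HOL-Analysis.Analysis"
begin

text \<open>Square real matrices indexed by a finite linearly ordered type 'n
  (playing the role of the index set {1..n} with its usual order).\<close>

definition real_eigenvalues :: "real^'n^'n \<Rightarrow> real set" where
  "real_eigenvalues A = {\<mu>. \<exists>v. v \<noteq> 0 \<and> A *v v = \<mu> *s v}"

definition is_diag_mat :: "real^'n^'n \<Rightarrow> bool" where
  "is_diag_mat A \<longleftrightarrow> (\<forall>i j. i \<noteq> j \<longrightarrow> A $ i $ j = 0)"

definition adjacent_idx :: "'n::linorder \<Rightarrow> 'n \<Rightarrow> bool" where
  "adjacent_idx i j \<longleftrightarrow>
     (i < j \<and> \<not> (\<exists>k. i < k \<and> k < j)) \<or> (j < i \<and> \<not> (\<exists>k. j < k \<and> k < i))"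

definition tridiagonal :: "real^('n::{finite,linorder})^('n::{finite,linorder}) \<Rightarrow> bool" where
  "tridiagonal A \<longleftrightarrow> (\<forall>i j. i \<noteq> j \<and> \<not> adjacent_idx i j \<longrightarrow> A $ i $ j = 0)"

definition T_Lambda :: "('n::{finite,linorder} \<Rightarrow> real) \<Rightarrow> (real^('n::{finite,linorder})^('n::{finite,linorder})) set" where
  "T_Lambda lam = {T. transpose T = T \<and> tridiagonal T \<and> real_eigenvalues T = range lam}"

definition upper_triangular :: "real^('n::{finite,linorder})^('n::{finite,linorder}) \<Rightarrow> bool" where
  "upper_triangular R \<longleftrightarrow> (\<forall>i j. j < i \<longrightarrow> R $ i $ j = 0)"

definition qr_Q :: "real^('n::{finite,linorder})^('n::{finite,linorder}) \<Rightarrow> real^('n::{finite,linorder})^('n::{finite,linorder})" where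
  "qr_Q A = (THE Q. \<exists>R. orthogonal_matrix Q \<and> upper_triangular R \<and>
                        (\<forall>i. R $ i $ i > 0) \<and> A = Q ** R)"

definition mat_fun :: "(real \<Rightarrow> real) \<Rightarrow> real^'n^'n \<Rightarrow> real^'n^'n" where
  "mat_fun f T =
    (let Q = (SOME Q. orthogonal_matrix Q \<and> is_diag_mat (transpose Q ** T ** Q));
         D = transpose Q ** T ** Q
     in Q ** (\<chi> i j. if i = j then f (D $ i $ i) else 0) ** transpose Q)"

definition qr_step :: "(real \<Rightarrow> real) \<Rightarrow> real^('n::{finite,linorder})^('n::{finite,linorder}) \<Rightarrow> real^('n::{finite,linorder})^('n::{finite,linorder})" where
  "qr_step f T = (let Q = qr_Q (mat_fun f T) in transpose Q ** T ** Q)"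

end

theory Submission
  imports Defs "HOL-Computational_Algebra.Polynomial"
begin

definition diagm :: "('n::finite \<Rightarrow> real) \<Rightarrow> real^'n^'n" where
  "diagm d = (\<chi> i j. if i = j then d i else 0)"

fun mpow :: "real^'n::finite^'n \<Rightarrow> nat \<Rightarrow> real^'n^'n" where
  "mpow S 0 = mat 1"
| "mpow S (Suc k) = S ** mpow S k"

definition mpoly :: "real poly \<Rightarrow> real^'n::finite^'n \<Rightarrow> real^'n^'n" where
  "mpoly p S = (\<Sum>k\<le>degree p. coeff p k *\<^sub>R mpow S k)"

lemma mat_mul_sum_left: "(A::real^'n::finite^'m::finite) ** sum f I = (\<Sum>x\<in>I. A ** f x)"
  by (simp add: matrix_matrix_mult_def vec_eq_iff sum_distrib_left sum_component sum.swap[of _ UNIV I])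

lemma mat_mul_sum_right: "sum f I ** (A::real^'n::finite^'m::finite) = (\<Sum>x\<in>I. f x ** A)"
  by (simp add: matrix_matrix_mult_def vec_eq_iff sum_distrib_right sum_component sum.swap[of _ UNIV I])

lemma mat_scale_right: "(c *\<^sub>R A) ** (B::real^'n::finite^'m::finite) = c *\<^sub>R (A ** B)"
  by (simp add: scalar_matrix_assoc)

lemma mat_scale_left: "(A::real^'n::finite^'m::finite) ** (c *\<^sub>R B) = c *\<^sub>R (A ** B)"
  by (simp add: matrix_matrix_mult_def vec_eq_iff sum_distrib_left mult_ac)


lemma mpow_conj:
  assumes "orthogonal_matrix Q"
  shows "mpow (Q ** D ** transpose Q) k = Q ** mpow D k ** transpose Q"
proof (induction k)
  case 0 then show ?case using assms by (simp add: orthogonal_matrix_def)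
next
  case (Suc k)
  have "mpow (Q ** D ** transpose Q) (Suc k) = Q ** D ** (transpose Q ** Q) ** mpow D k ** transpose Q"
    using Suc by (simp add: matrix_mul_assoc)
  also have "\<dots> = Q ** mpow D (Suc k) ** transpose Q"
    using assms by (simp add: orthogonal_matrix_def matrix_mul_assoc)
  finally show ?case .
qed

lemma mpoly_conj:
  assumes "orthogonal_matrix Q"
  shows "mpoly p (Q ** D ** transpose Q) = Q ** mpoly p D ** transpose Q"
  by (simp add: mpoly_def mpow_conj[OF assms] mat_mul_sum_left mat_mul_sum_right mat_scale_left mat_scale_right)

lemma mpoly_conj':
  assumes "orthogonal_matrix Q"
  shows "mpoly p (transpose Q ** D ** Q) = transpose Q ** mpoly p D ** Q"
  using mpoly_conj[of "transpose Q" p D] assms by simp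

lemma diagm_mul: "diagm a ** diagm b = diagm (\<lambda>i. a i * b i)"
  unfolding diagm_def matrix_matrix_mult_def vec_eq_iff
proof (intro allI)
  fix i j
  have "(\<Sum>k\<in>UNIV. (if i = k then a i else 0) * (if k = j then b k else 0)) = (\<Sum>k\<in>UNIV. if k = i then (if i = j then a i * b i else 0) else 0)"
    by (rule sum.cong) auto
  then show "(\<chi> i j. \<Sum>k\<in>UNIV. (\<chi> i j. if i = j then a i else 0) $ i $ k * (\<chi> i j. if i = j then b i else 0) $ k $ j) $ i $ j =
             (\<chi> i j. if i = j then a i * b i else 0) $ i $ j" by simp
qed

lemma mpow_diag: "mpow (diagm d) k = diagm (\<lambda>i. d i ^ k)"
proof (induction k)
  case 0 then show ?case by (simp add: mat_def diagm_def)
next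
  case (Suc k) then show ?case by (simp add: diagm_mul)
qed

lemma diagm_sum: "finite I \<Longrightarrow> (\<Sum>k\<in>I. c k *\<^sub>R diagm (d k)) = diagm (\<lambda>i. \<Sum>k\<in>I. c k * d k i)"
  by (induction I rule: finite_induct) (auto simp: diagm_def vec_eq_iff)

lemma mpoly_diag: "mpoly p (diagm d) = diagm (\<lambda>i. poly p (d i))"
  by (simp add: mpoly_def mpow_diag diagm_sum poly_altdef)

lemma mpow_comm: "S ** mpow S k = mpow S k ** S"
  by (induction k) (simp_all add: matrix_mul_assoc)

lemma transpose_mpow: "transpose (mpow S k) = mpow (transpose S) k"
proof (induction k)
  case (Suc k) then show ?case by (simp add: matrix_transpose_mul mpow_comm)
qed simp

lemma transpose_sum: "transpose (sum f I) = (\<Sum>x\<in>I. transpose (f x :: real^'n::finite^'m::finite))"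
  by (simp add: transpose_def vec_eq_iff sum_component)

lemma transpose_mpoly: "transpose (mpoly p S) = mpoly p (transpose S)"
  by (simp add: mpoly_def transpose_sum transpose_scalar transpose_mpow)

lemma tendsto_matmul:
  fixes A B :: "'a \<Rightarrow> real^'n::finite^'n"
  assumes "(A \<longlongrightarrow> A0) F" "(B \<longlongrightarrow> B0) F"
  shows "((\<lambda>x. A x ** B x) \<longlongrightarrow> A0 ** B0) F"
  unfolding matrix_matrix_mult_def
  by (intro tendsto_vec_lambda tendsto_sum tendsto_mult tendsto_vec_nth assms)

lemma tendsto_mpow:
  fixes A :: "'a \<Rightarrow> real^'n::finite^'n"
  assumes "(A \<longlongrightarrow> A0) F"
  shows "((\<lambda>x. mpow (A x) k) \<longlongrightarrow> mpow A0 k) F"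
  by (induction k) (auto intro!: tendsto_matmul assms)

lemma tendsto_mpoly:
  fixes A :: "'a \<Rightarrow> real^'n::finite^'n"
  assumes "(A \<longlongrightarrow> A0) F"
  shows "((\<lambda>x. mpoly p (A x)) \<longlongrightarrow> mpoly p A0) F"
  unfolding mpoly_def by (intro tendsto_sum tendsto_scaleR tendsto_const tendsto_mpow assms)

definition CC :: "('n::{finite,linorder} \<Rightarrow> real) \<Rightarrow> (real^('n::{finite,linorder})^('n::{finite,linorder})) set" where
  "CC lam = {S. transpose S = S \<and> real_eigenvalues S = range lam}"

lemma sym_inner: 
  fixes S :: "real^'n::finite^'n"
  assumes "transpose S = S"
  shows "inner (S *v x) y = inner x (S *v y)"
proof -
  have "S *v x = x v* S" using vector_transpose_matrix[of x S] assms by simp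
  then show ?thesis by (simp add: dot_lmul_matrix)
qed

lemma diagonalize:
  fixes S :: "real^('n::{finite,linorder})^('n::{finite,linorder})"
  assumes S: "S \<in> CC lam" and inj: "inj lam"
  shows "\<exists>Q. orthogonal_matrix Q \<and> S = Q ** diagm lam ** transpose Q"
proof -
  have "\<forall>i. \<exists>v. v \<noteq> 0 \<and> S *v v = lam i *s v"
    using S unfolding CC_def real_eigenvalues_def by blast
  then obtain v where v: "\<And>i. v i \<noteq> 0" "\<And>i. S *v v i = lam i *s v i" by metis
  define u where "u i = (1 / norm (v i)) *\<^sub>R v i" for i
  have nu: "norm (u i) = 1" for i using v(1) by (simp add: u_def)
  have Su: "S *v u i = lam i *\<^sub>R u i" for i
    using v(2)[of i] by (simp add: u_def matrix_vector_mult_scaleR scalar_mult_eq_scaleR)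
  have orth: "inner (u i) (u j) = 0" if "i \<noteq> j" for i j
  proof -
    have "lam i * inner (u i) (u j) = inner (S *v u i) (u j)" by (simp add: Su)
    also have "\<dots> = inner (u i) (S *v u j)" using S by (simp add: CC_def sym_inner)
    also have "\<dots> = lam j * inner (u i) (u j)" by (simp add: Su)
    finally have "(lam i - lam j) * inner (u i) (u j) = 0" by (simp add: algebra_simps)
    moreover have "lam i \<noteq> lam j" using inj that by (auto dest: injD)
    ultimately show ?thesis by simp
  qed
  define Q where "Q = (\<chi> k i. u i $ k)"
  have colQ: "column i Q = u i" for i by (simp add: Q_def column_def vec_eq_iff)
  have oQ: "orthogonal_matrix Q"
    unfolding orthogonal_matrix_orthonormal_columns colQ using nu orth by (auto simp: orthogonal_def)
  have SQ: "S ** Q = Q ** diagm lam"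
  proof -
    have "(S ** Q) $ k $ i = (Q ** diagm lam) $ k $ i" for k i
    proof -
      have "(S ** Q) $ k $ i = (S *v u i) $ k"
        by (simp add: matrix_matrix_mult_def matrix_vector_mult_def Q_def)
      also have "\<dots> = lam i * u i $ k" by (simp add: Su)
      also have "\<dots> = (Q ** diagm lam) $ k $ i"
      proof -
        have "(\<Sum>l\<in>UNIV. u l $ k * (if l = i then lam l else 0)) = u i $ k * lam i"
          by (simp add: if_distrib cong: if_cong)
        then show ?thesis by (simp add: matrix_matrix_mult_def Q_def diagm_def)
      qed
      finally show ?thesis .
    qed
    then show ?thesis by (simp add: vec_eq_iff)
  qed
  have "S = S ** (Q ** transpose Q)" using oQ by (simp add: orthogonal_matrix_def)
  also have "\<dots> = Q ** diagm lam ** transpose Q" by (simp add: matrix_mul_assoc SQ)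
  finally show ?thesis using oQ by blast
qed

lemma diag_mult_axis:
  assumes "is_diag_mat D"
  shows "D *v axis j 1 = D $ j $ j *s axis j (1::real)"
  using assms unfolding is_diag_mat_def
  by (auto simp: vec_eq_iff matrix_vector_mult_def axis_def if_distrib if_distribR cong: if_cong)

lemma diag_entry_eigen:
  fixes S :: "real^('n::{finite,linorder})^('n::{finite,linorder})"
  assumes S: "S \<in> CC lam" and Q: "orthogonal_matrix Q" and D: "is_diag_mat (transpose Q ** S ** Q)"
  shows "(transpose Q ** S ** Q) $ j $ j \<in> range lam"
proof -
  let ?D = "transpose Q ** S ** Q"
  have SQ: "S ** Q = Q ** ?D"
    using Q by (simp add: orthogonal_matrix_def matrix_mul_assoc)
  let ?w = "Q *v axis j 1"
  have "S *v ?w = Q *v (?D *v axis j 1)"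
    by (simp add: matrix_vector_mul_assoc SQ)
  also have "\<dots> = ?D $ j $ j *s ?w"
    by (simp add: diag_mult_axis[OF D] vector_scalar_commute)
  finally have ev: "S *v ?w = ?D $ j $ j *s ?w" .
  have "?w \<noteq> 0"
  proof
    assume "?w = 0"
    then have "transpose Q *v ?w = 0" by simp
    moreover have "transpose Q *v ?w = axis j 1"
      using Q by (simp add: matrix_vector_mul_assoc orthogonal_matrix_def del: transpose_matrix_vector)
    ultimately show False by (simp add: axis_eq_0_iff)
  qed
  with ev have "?D $ j $ j \<in> real_eigenvalues S" unfolding real_eigenvalues_def by blast
  with S show ?thesis by (simp add: CC_def)
qed

lemma interp_exists:
  fixes lam :: "'n::finite \<Rightarrow> real"
  assumes "inj lam"
  shows "\<exists>p. \<forall>i. poly p (lam i) = f (lam i)"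
proof -
  define c where "c i = f (lam i) / (\<Prod>j\<in>UNIV-{i}. (lam i - lam j))" for i
  define p where "p = (\<Sum>i\<in>UNIV. smult (c i) (\<Prod>j\<in>UNIV-{i}. [:- lam j, 1:]))"
  have "poly p (lam k) = f (lam k)" for k
  proof -
    have z: "(\<Prod>j\<in>UNIV-{i}. (lam k - lam j)) = 0" if "i \<noteq> k" for i
      using that by (subst prod_zero_iff) auto
    have nz: "(\<Prod>j\<in>UNIV-{k}. (lam k - lam j)) \<noteq> 0"
      using assms by (auto simp: prod_zero_iff dest: injD)
    have "poly p (lam k) = (\<Sum>i\<in>UNIV. c i * (\<Prod>j\<in>UNIV-{i}. (lam k - lam j)))"
      by (simp add: p_def poly_sum poly_prod)
    also have "\<dots> = c k * (\<Prod>j\<in>UNIV-{k}. (lam k - lam j))"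
      by (subst sum.remove[of _ k]) (auto simp: z)
    also have "\<dots> = f (lam k)" using nz by (simp add: c_def)
    finally show ?thesis .
  qed
  then show ?thesis by blast
qed

lemma diag_is_diagm: "is_diag_mat D \<Longrightarrow> D = diagm (\<lambda>i. D $ i $ i)"
  by (auto simp: is_diag_mat_def diagm_def vec_eq_iff)

lemma mat_fun_mpoly:
  fixes S :: "real^('n::{finite,linorder})^('n::{finite,linorder})"
  assumes S: "S \<in> CC lam" and inj: "inj lam" and p: "\<forall>i. poly p (lam i) = f (lam i)"
  shows "mat_fun f S = mpoly p S"
proof -
  define Q where "Q = (SOME Q. orthogonal_matrix Q \<and> is_diag_mat (transpose Q ** S ** Q))"
  obtain Q1 where Q1: "orthogonal_matrix Q1" "S = Q1 ** diagm lam ** transpose Q1"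
    using diagonalize[OF S inj] by blast
  have "transpose Q1 ** S ** Q1 = (transpose Q1 ** Q1) ** diagm lam ** (transpose Q1 ** Q1)"
    using Q1 by (simp add: matrix_mul_assoc)
  then have "transpose Q1 ** S ** Q1 = diagm lam"
    using Q1 by (simp add: orthogonal_matrix_def)
  then have "orthogonal_matrix Q1 \<and> is_diag_mat (transpose Q1 ** S ** Q1)"
    using Q1 by (simp add: is_diag_mat_def diagm_def)
  then have Q: "orthogonal_matrix Q \<and> is_diag_mat (transpose Q ** S ** Q)"
    unfolding Q_def by (rule someI)
  define D where "D = transpose Q ** S ** Q"
  have Dd: "D = diagm (\<lambda>i. D $ i $ i)" using Q by (simp add: D_def diag_is_diagm)
  have Dr: "D $ i $ i \<in> range lam" for i using diag_entry_eigen[OF S] Q by (simp add: D_def)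
  have "Q ** D ** transpose Q = (Q ** transpose Q) ** S ** (Q ** transpose Q)"
    by (simp add: D_def matrix_mul_assoc)
  then have SD: "S = Q ** D ** transpose Q"
    using Q by (simp add: orthogonal_matrix_def)
  have "(\<chi> i j. if i = j then f (D $ i $ i) else 0) = diagm (\<lambda>i. poly p (D $ i $ i))"
  proof -
    have "f (D $ i $ i) = poly p (D $ i $ i)" for i using Dr[of i] p by auto
    then show ?thesis by (auto simp: diagm_def vec_eq_iff)
  qed
  also have "\<dots> = mpoly p D" by (subst Dd) (simp add: mpoly_diag)
  finally have "mat_fun f S = Q ** mpoly p D ** transpose Q"
    unfolding mat_fun_def Let_def Q_def[symmetric] D_def[symmetric] by simp
  also have "\<dots> = mpoly p S" using SD mpoly_conj Q by metis
  finally show ?thesis .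
qed

lemma orth_vec_nz:
  assumes "orthogonal_matrix Q" "v \<noteq> 0"
  shows "Q *v v \<noteq> (0::real^'n::finite)"
proof
  assume "Q *v v = 0"
  then have "transpose Q *v (Q *v v) = 0" by simp
  moreover have "transpose Q *v (Q *v v) = v"
    using assms by (simp add: matrix_vector_mul_assoc orthogonal_matrix_def del: transpose_matrix_vector)
  ultimately show False using assms by simp
qed

lemma eig_conj_sub:
  fixes S :: "real^'n::finite^'n"
  assumes Q: "orthogonal_matrix Q"
  shows "real_eigenvalues (transpose Q ** S ** Q) \<subseteq> real_eigenvalues S"
proof
  fix \<mu> assume "\<mu> \<in> real_eigenvalues (transpose Q ** S ** Q)"
  then obtain v where v: "v \<noteq> 0" "(transpose Q ** S ** Q) *v v = \<mu> *s v"
    unfolding real_eigenvalues_def by blast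
  have "S *v (Q *v v) = (Q ** transpose Q) ** S ** Q *v v"
    using Q by (simp add: orthogonal_matrix_def matrix_vector_mul_assoc del: transpose_matrix_vector)
  also have "\<dots> = Q *v ((transpose Q ** S ** Q) *v v)"
    by (simp add: matrix_vector_mul_assoc matrix_mul_assoc del: transpose_matrix_vector)
  also have "\<dots> = \<mu> *s (Q *v v)" by (simp add: v vector_scalar_commute)
  finally show "\<mu> \<in> real_eigenvalues S"
    unfolding real_eigenvalues_def using orth_vec_nz[OF Q v(1)] by blast
qed

lemma CC_conj:
  fixes S :: "real^('n::{finite,linorder})^('n::{finite,linorder})"
  assumes S: "S \<in> CC lam" and Q: "orthogonal_matrix Q"
  shows "transpose Q ** S ** Q \<in> CC lam"
proof -
  have sym: "transpose (transpose Q ** S ** Q) = transpose Q ** S ** Q"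
    using S by (simp add: CC_def matrix_transpose_mul matrix_mul_assoc)
  have "transpose (transpose Q) ** (transpose Q ** S ** Q) ** transpose Q
        = (Q ** transpose Q) ** S ** (Q ** transpose Q)"
    by (simp add: matrix_mul_assoc)
  also have "\<dots> = S" using Q by (simp add: orthogonal_matrix_def)
  finally have "real_eigenvalues S \<subseteq> real_eigenvalues (transpose Q ** S ** Q)"
    using eig_conj_sub[of "transpose Q" "transpose Q ** S ** Q"] Q by simp
  then have "real_eigenvalues (transpose Q ** S ** Q) = real_eigenvalues S"
    using eig_conj_sub[OF Q, of S] by blast
  with S sym show ?thesis by (simp add: CC_def)
qed

lemma diag_lemma:
  fixes S :: "real^('n::{finite,linorder})^('n::{finite,linorder})"
  assumes S: "S \<in> CC lam" and inj: "inj lam" and p: "\<forall>i. poly p (lam i) = f (lam i)"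
    and fabs: "\<And>i j. i \<noteq> j \<Longrightarrow> \<bar>f (lam i)\<bar> \<noteq> \<bar>f (lam j)\<bar>"
    and B: "is_diag_mat (transpose (mpoly p S) ** mpoly p S)"
  shows "is_diag_mat S"
proof -
  obtain Q where Q: "orthogonal_matrix Q" "S = Q ** diagm lam ** transpose Q"
    using diagonalize[OF S inj] by blast
  define g where "g i = f (lam i) ^ 2" for i
  have ginj: "g i = g j \<Longrightarrow> i = j" for i j
  proof (rule ccontr)
    assume "g i = g j" "i \<noteq> j"
    then have "\<bar>f (lam i)\<bar> = \<bar>f (lam j)\<bar>" unfolding g_def by (metis real_sqrt_abs)
    with fabs[OF \<open>i \<noteq> j\<close>] show False by simp
  qed
  have A: "mpoly p S = Q ** diagm (\<lambda>i. f (lam i)) ** transpose Q"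
    using Q by (simp add: mpoly_conj mpoly_diag p)
  have tdg: "transpose (diagm d) = diagm d" for d by (simp add: diagm_def transpose_def vec_eq_iff)
  define B where "B = transpose (mpoly p S) ** mpoly p S"
  have "B = Q ** diagm (\<lambda>i. f (lam i)) ** (transpose Q ** Q) ** diagm (\<lambda>i. f (lam i)) ** transpose Q"
    by (simp add: B_def A matrix_transpose_mul tdg matrix_mul_assoc)
  also have "\<dots> = Q ** (diagm (\<lambda>i. f (lam i)) ** diagm (\<lambda>i. f (lam i))) ** transpose Q"
    using Q(1) by (simp add: orthogonal_matrix_def matrix_mul_assoc)
  also have "\<dots> = Q ** diagm g ** transpose Q"
    by (simp add: diagm_mul g_def[abs_def] power2_eq_square)
  finally have Bq: "B = Q ** diagm g ** transpose Q" .
  have "B ** Q = Q ** diagm g ** (transpose Q ** Q)" by (simp add: Bq matrix_mul_assoc)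
  then have BQ: "B ** Q = Q ** diagm g" using Q(1) by (simp add: orthogonal_matrix_def)
  have Bd: "is_diag_mat B" using B by (simp add: B_def)
  have key: "B $ k $ k * Q $ k $ j = Q $ k $ j * g j" for k j
  proof -
    have "(B ** Q) $ k $ j = B $ k $ k * Q $ k $ j"
    proof -
      have "(\<Sum>l\<in>UNIV. B $ k $ l * Q $ l $ j) = (\<Sum>l\<in>UNIV. if l = k then B $ k $ k * Q $ k $ j else 0)"
        using Bd by (intro sum.cong) (auto simp: is_diag_mat_def)
      then show ?thesis by (simp add: matrix_matrix_mult_def)
    qed
    moreover have "(Q ** diagm g) $ k $ j = Q $ k $ j * g j"
    proof -
      have "(\<Sum>l\<in>UNIV. Q $ k $ l * diagm g $ l $ j) = (\<Sum>l\<in>UNIV. if l = j then Q $ k $ j * g j else 0)"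
        by (intro sum.cong) (auto simp: diagm_def)
      then show ?thesis by (simp add: matrix_matrix_mult_def)
    qed
    ultimately show ?thesis using BQ by (metis mult.commute)
  qed
  show ?thesis unfolding is_diag_mat_def
  proof (intro allI impI)
    fix k l :: 'n assume kl: "k \<noteq> l"
    define c where "c = lam (SOME j. g j = B $ k $ k)"
    have lc: "Q $ k $ j * lam j = Q $ k $ j * c" for j
    proof (cases "Q $ k $ j = 0")
      case False
      then have gj: "g j = B $ k $ k" using key[of k j] by simp
      then have "(SOME j. g j = B $ k $ k) = j"
        using ginj by (metis (mono_tags, lifting) someI)
      then show ?thesis by (simp add: c_def)
    qed simp
    have S_ent: "S $ k $ l = (\<Sum>j\<in>UNIV. Q $ k $ j * lam j * Q $ l $ j)"
    proof -
      have "(Q ** diagm lam) $ k $ j = Q $ k $ j * lam j" for j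
      proof -
        have "(\<Sum>m\<in>UNIV. Q $ k $ m * diagm lam $ m $ j) = (\<Sum>m\<in>UNIV. if m = j then Q $ k $ j * lam j else 0)"
          by (intro sum.cong) (auto simp: diagm_def)
        then show ?thesis by (simp add: matrix_matrix_mult_def)
      qed
      then show ?thesis by (subst Q(2)) (simp add: matrix_matrix_mult_def transpose_def)
    qed
    have QQ: "(\<Sum>j\<in>UNIV. Q $ k $ j * Q $ l $ j) = 0"
    proof -
      have "(Q ** transpose Q) $ k $ l = 0" using Q(1) kl by (simp add: orthogonal_matrix_def mat_def)
      then show ?thesis by (simp add: matrix_matrix_mult_def transpose_def)
    qed
    have "S $ k $ l = (\<Sum>j\<in>UNIV. c * (Q $ k $ j * Q $ l $ j))"
      unfolding S_ent by (intro sum.cong refl) (metis lc mult.commute mult.left_commute)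
    also have "\<dots> = 0" by (simp add: sum_distrib_left[symmetric] QQ)
    finally show "S $ k $ l = 0" .
  qed
qed

lemma column_as_mult: "column j A = A *v axis j (1::real)"
  by (simp add: column_def matrix_vector_mult_def axis_def vec_eq_iff if_distrib if_distribR cong: if_cong)

lemma col_indep:
  fixes A :: "real^'n::finite^'n"
  assumes inv: "invertible A" and b: "b \<notin> X"
  shows "column b A \<notin> span ((\<lambda>j. column j A) ` X)"
proof
  assume "column b A \<in> span ((\<lambda>j. column j A) ` X)"
  moreover have "(\<lambda>j. column j A) ` X = (\<lambda>x. A *v x) ` ((\<lambda>j. axis j 1) ` X)"
    by (auto simp: column_as_mult image_image)
  ultimately have "column b A \<in> (\<lambda>x. A *v x) ` span ((\<lambda>j. axis j 1) ` X)"
    by (simp add: span_linear_image)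
  then obtain y where y: "y \<in> span ((\<lambda>j. axis j 1) ` X)" "A *v axis b 1 = A *v y"
    by (auto simp: column_as_mult)
  have "axis b 1 = y" using inj_matrix_vector_mult[OF inv] y(2) by (auto dest: injD)
  moreover have "y $ b = 0" using y(1)
  proof (induction rule: span_induct_alt)
    case base then show ?case by simp
  next
    case (step c x y) then show ?case using b by (auto simp: axis_def split: if_splits)
  qed
  ultimately have "(axis b 1 :: real^'n) $ b = 0" by simp
  then show False by simp
qed

lemma gs_exists:
  fixes A :: "real^('n::{finite,linorder})^('n::{finite,linorder})"
  assumes inv: "invertible A"
  shows "\<exists>q r. (\<forall>i j. inner (q i) (q j) = (if i = j then 1 else 0)) \<and>
               (\<forall>j. r j j > (0::real) \<and> column j A = (\<Sum>i\<in>{i. i \<le> j}. r i j *\<^sub>R q i))"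
proof -
  let ?a = "\<lambda>j. column j A"
  have fin: "finite (UNIV :: 'n set)" by simp
  have "\<exists>q r. (\<forall>i\<in>X. \<forall>j\<in>X. inner (q i) (q j) = (if i = j then 1 else 0)) \<and>
               (\<forall>j\<in>X. r j j > (0::real) \<and> ?a j = (\<Sum>i\<in>{i\<in>X. i \<le> j}. r i j *\<^sub>R q i)) \<and>
               (\<forall>i\<in>X. q i \<in> span (?a ` X))" if "finite X" for X
    using that
  proof (induction X rule: finite_linorder_max_induct)
    case empty then show ?case by simp
  next
    case (insert b X)
    then obtain q r where
      on: "\<forall>i\<in>X. \<forall>j\<in>X. inner (q i) (q j) = (if i = j then 1 else 0)" and
      rr: "\<forall>j\<in>X. r j j > (0::real) \<and> ?a j = (\<Sum>i\<in>{i\<in>X. i \<le> j}. r i j *\<^sub>R q i)" and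
      sp: "\<forall>i\<in>X. q i \<in> span (?a ` X)" by blast
    have bX: "b \<notin> X" using insert by auto
    define u where "u = ?a b - (\<Sum>i\<in>X. inner (?a b) (q i) *\<^sub>R q i)"
    have sumsp: "(\<Sum>i\<in>X. inner (?a b) (q i) *\<^sub>R q i) \<in> span (?a ` X)"
      by (intro span_sum span_mul) (use sp in auto)
    have u0: "u \<noteq> 0"
    proof
      assume "u = 0"
      then have "?a b = (\<Sum>i\<in>X. inner (?a b) (q i) *\<^sub>R q i)" by (simp add: u_def)
      with sumsp col_indep[OF inv bX] show False by simp
    qed
    have uq: "inner u (q i) = 0" if "i \<in> X" for i
    proof -
      have "(\<Sum>i'\<in>X. inner (?a b) (q i') * inner (q i') (q i)) = (\<Sum>i'\<in>X. if i' = i then inner (?a b) (q i) else 0)"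
        using on that by (intro sum.cong) auto
      also have "\<dots> = inner (?a b) (q i)" using that insert(1) by simp
      finally show ?thesis by (simp add: u_def inner_diff_left inner_sum_left)
    qed
    define q' where "q' = q(b := (1 / norm u) *\<^sub>R u)"
    define r' where "r' = (\<lambda>i j. if j = b then (if i = b then norm u else inner (?a b) (q i)) else r i j)"
    have on': "\<forall>i\<in>insert b X. \<forall>j\<in>insert b X. inner (q' i) (q' j) = (if i = j then 1 else 0)"
    proof (intro ballI)
      fix i j assume i: "i \<in> insert b X" and j: "j \<in> insert b X"
      show "inner (q' i) (q' j) = (if i = j then 1 else 0)"
      proof (cases "i = b")
        case True
        show ?thesis
        proof (cases "j = b")
          case True
          with \<open>i = b\<close> show ?thesis using u0
            by (simp add: q'_def inner_commute power2_norm_eq_inner[symmetric] power2_eq_square)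
        next
          case False
          then have "j \<in> X" using j by auto
          with \<open>i = b\<close> False show ?thesis using uq by (simp add: q'_def)
        qed
      next
        case False
        then have "i \<in> X" using i by auto
        show ?thesis
        proof (cases "j = b")
          case True
          with \<open>i \<in> X\<close> False show ?thesis using uq by (simp add: q'_def inner_commute)
        next
          case False
          then have "j \<in> X" using j by auto
          with \<open>i \<in> X\<close> \<open>i \<noteq> b\<close> False show ?thesis using on by (simp add: q'_def)
        qed
      qed
    qed
    have rr': "\<forall>j\<in>insert b X. r' j j > (0::real) \<and> ?a j = (\<Sum>i\<in>{i\<in>insert b X. i \<le> j}. r' i j *\<^sub>R q' i)"
    proof
      fix j assume j: "j \<in> insert b X"
      show "r' j j > (0::real) \<and> ?a j = (\<Sum>i\<in>{i\<in>insert b X. i \<le> j}. r' i j *\<^sub>R q' i)"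
      proof (cases "j = b")
        case True
        have s: "{i\<in>insert b X. i \<le> b} = insert b X" using insert(2) by auto
        have "(\<Sum>i\<in>{i\<in>insert b X. i \<le> j}. r' i j *\<^sub>R q' i)
              = norm u *\<^sub>R ((1 / norm u) *\<^sub>R u) + (\<Sum>i\<in>X. inner (?a b) (q i) *\<^sub>R q i)"
          unfolding True s using insert(1) bX
          by (simp add: r'_def q'_def) (intro sum.cong; auto)
        also have "\<dots> = ?a b" using u0 by (simp add: u_def)
        finally show ?thesis using True u0 by (simp add: r'_def)
      next
        case False
        then have jX: "j \<in> X" using j by auto
        have s: "{i\<in>insert b X. i \<le> j} = {i\<in>X. i \<le> j}" using insert(2) jX by auto
        have "(\<Sum>i\<in>{i\<in>insert b X. i \<le> j}. r' i j *\<^sub>R q' i) = (\<Sum>i\<in>{i\<in>X. i \<le> j}. r i j *\<^sub>R q i)"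
          unfolding s using False bX by (intro sum.cong) (auto simp: r'_def q'_def)
        then show ?thesis using rr jX False by (simp add: r'_def)
      qed
    qed
    have sp': "\<forall>i\<in>insert b X. q' i \<in> span (?a ` insert b X)"
    proof
      fix i assume i: "i \<in> insert b X"
      have mono: "span (?a ` X) \<subseteq> span (?a ` insert b X)" by (intro span_mono) auto
      show "q' i \<in> span (?a ` insert b X)"
      proof (cases "i = b")
        case True
        have ab: "?a b \<in> span (?a ` insert b X)" by (rule span_base) auto
        have "u \<in> span (?a ` insert b X)"
          unfolding u_def using sumsp mono ab by (intro span_diff) auto
        then show ?thesis using True by (simp add: q'_def span_mul)
      next
        case False
        then show ?thesis using i sp mono bX by (auto simp: q'_def)
      qed
    qed
    show ?case using on' rr' sp' by blast
  qed
  from this[OF fin] obtain q r where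
    "\<forall>i\<in>UNIV. \<forall>j\<in>UNIV. inner (q i) (q j) = (if i = j then 1 else 0)"
    "\<forall>j\<in>UNIV. r j j > (0::real) \<and> ?a j = (\<Sum>i\<in>{i\<in>UNIV. i \<le> j}. r i j *\<^sub>R q i)"
    by blast
  then show ?thesis by (intro exI[of _ q] exI[of _ r]) simp
qed

lemma qr_exists:
  fixes A :: "real^('n::{finite,linorder})^('n::{finite,linorder})"
  assumes inv: "invertible A"
  shows "\<exists>Q R. orthogonal_matrix Q \<and> upper_triangular R \<and> (\<forall>i. R $ i $ i > 0) \<and> A = Q ** R"
proof -
  obtain q r where on: "\<forall>i j. inner (q i) (q j) = (if i = j then 1 else 0)"
    and rr: "\<forall>j. r j j > (0::real) \<and> column j A = (\<Sum>i\<in>{i. i \<le> j}. r i j *\<^sub>R q i)"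
    using gs_exists[OF inv] by blast
  define Q where "Q = (\<chi> k i. q i $ k)"
  define R where "R = (\<chi> i j. if i \<le> j then r i j else 0)"
  have colQ: "column i Q = q i" for i by (simp add: Q_def column_def vec_eq_iff)
  have oQ: "orthogonal_matrix Q"
    unfolding orthogonal_matrix_orthonormal_columns colQ using on
    by (auto simp: orthogonal_def norm_eq_1)
  have ut: "upper_triangular R" by (auto simp: upper_triangular_def R_def)
  have pos: "\<forall>i. R $ i $ i > 0" using rr by (simp add: R_def)
  have "A $ k $ j = (Q ** R) $ k $ j" for k j
  proof -
    have "A $ k $ j = column j A $ k" by (simp add: column_def)
    also have "\<dots> = (\<Sum>i\<in>{i. i \<le> j}. r i j * q i $ k)" using rr by (simp add: sum_component)
    also have "\<dots> = (\<Sum>i\<in>UNIV. if i \<le> j then r i j * q i $ k else 0)"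
      by (simp add: sum.If_cases)
    also have "\<dots> = (Q ** R) $ k $ j"
      by (simp add: matrix_matrix_mult_def Q_def R_def mult.commute if_distrib if_distribR cong: if_cong)
    finally show ?thesis .
  qed
  then have "A = Q ** R" by (simp add: vec_eq_iff)
  then show ?thesis using oQ ut pos by blast
qed

lemma qr_unique:
  fixes Q1 Q2 R1 R2 :: "real^('n::{finite,linorder})^('n::{finite,linorder})"
  assumes o1: "orthogonal_matrix Q1" and o2: "orthogonal_matrix Q2"
    and u1: "upper_triangular R1" and u2: "upper_triangular R2"
    and p1: "\<forall>i. R1 $ i $ i > 0" and p2: "\<forall>i. R2 $ i $ i > 0"
    and eq: "Q1 ** R1 = Q2 ** R2"
  shows "Q1 = Q2"
proof -
  define M where "M = transpose Q2 ** Q1"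
  have MR: "M ** R1 = R2"
  proof -
    have "M ** R1 = transpose Q2 ** (Q1 ** R1)" by (simp add: M_def matrix_mul_assoc)
    also have "\<dots> = transpose Q2 ** (Q2 ** R2)" by (simp add: eq)
    also have "\<dots> = R2" using o2 by (simp add: matrix_mul_assoc orthogonal_matrix_def)
    finally show ?thesis .
  qed
  have oM: "orthogonal_matrix M" using o1 o2 by (simp add: M_def orthogonal_matrix_mul)
  have MtM: "(\<Sum>l\<in>UNIV. M $ l $ k * M $ l $ j) = (if k = j then 1 else 0)" for k j
  proof -
    have "(transpose M ** M) $ k $ j = (if k = j then 1 else 0)"
      using oM by (simp add: orthogonal_matrix_def mat_def)
    then show ?thesis by (simp add: matrix_matrix_mult_def transpose_def)
  qed
  have R2e: "R2 $ k $ j = (\<Sum>i\<in>UNIV. M $ k $ i * R1 $ i $ j)" for k j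
    using MR by (auto simp: matrix_matrix_mult_def vec_eq_iff)
  have col: "\<forall>k. M $ k $ j = (if k = j then 1 else 0)" for j
  proof (induction j rule: measure_induct_rule[where f="\<lambda>j. card {i. i < j}"])
    case (less j)
    have IH: "M $ k $ i = (if k = i then 1 else 0)" if "i < j" for i k
    proof -
      have "{i'. i' < i} \<subset> {i'. i' < j}" using that by auto
      then have "card {i'. i' < i} < card {i'. i' < j}" by (intro psubset_card_mono) auto
      then show ?thesis using less by blast
    qed
    have H: "R2 $ k $ j = M $ k $ j * R1 $ j $ j" if "\<not> k < j" for k
    proof -
      have "(\<Sum>i\<in>UNIV. M $ k $ i * R1 $ i $ j) = (\<Sum>i\<in>UNIV. if i = j then M $ k $ j * R1 $ j $ j else 0)"
      proof (intro sum.cong refl)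
        fix i
        show "M $ k $ i * R1 $ i $ j = (if i = j then M $ k $ j * R1 $ j $ j else 0)"
        proof (cases "i < j")
          case True
          then have "k \<noteq> i" using that by auto
          then show ?thesis using IH[OF True, of k] True by auto
        next
          case False
          then show ?thesis using u1 by (cases "i = j") (auto simp: upper_triangular_def)
        qed
      qed
      then show ?thesis using R2e[of k j] by simp
    qed
    have gt: "M $ k $ j = 0" if "j < k" for k
    proof -
      have "R2 $ k $ j = 0" using u2 that by (simp add: upper_triangular_def)
      then show ?thesis using H[of k] that p1[rule_format, of j] by auto
    qed
    have lt: "M $ k $ j = 0" if "k < j" for k
    proof -
      have "(\<Sum>l\<in>UNIV. M $ l $ k * M $ l $ j) = 0" using MtM[of k j] that by auto
      moreover have "(\<Sum>l\<in>UNIV. M $ l $ k * M $ l $ j) = (\<Sum>l\<in>UNIV. if l = k then M $ k $ j else 0)"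
        using IH[OF that] by (intro sum.cong) auto
      ultimately show ?thesis by simp
    qed
    have "(\<Sum>l\<in>UNIV. M $ l $ j * M $ l $ j) = 1" using MtM[of j j] by simp
    moreover have "(\<Sum>l\<in>UNIV. M $ l $ j * M $ l $ j) = (\<Sum>l\<in>UNIV. if l = j then M $ j $ j * M $ j $ j else 0)"
    proof (intro sum.cong refl)
      fix l show "M $ l $ j * M $ l $ j = (if l = j then M $ j $ j * M $ j $ j else 0)"
        using gt[of l] lt[of l] by (cases l j rule: linorder_cases) auto
    qed
    ultimately have sq: "M $ j $ j * M $ j $ j = 1" by simp
    have "R2 $ j $ j = M $ j $ j * R1 $ j $ j" using H by simp
    then have "M $ j $ j > 0" using p1 p2 by (metis zero_less_mult_pos2)
    with sq have "M $ j $ j = 1"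
      by (metis abs_of_pos mult_cancel_right1 real_sqrt_abs real_sqrt_mult_self power2_eq_square real_sqrt_one) 
    then show ?case using gt lt by (metis linorder_cases)
  qed
  then have "M = mat 1" by (simp add: mat_def vec_eq_iff)
  then have "Q2 ** M = Q2" by simp
  moreover have "Q2 ** M = Q1" using o2 by (simp add: M_def matrix_mul_assoc orthogonal_matrix_def)
  ultimately show ?thesis by simp
qed

lemma qr_Q_prop:
  fixes A :: "real^('n::{finite,linorder})^('n::{finite,linorder})"
  assumes inv: "invertible A"
  shows "\<exists>R. orthogonal_matrix (qr_Q A) \<and> upper_triangular R \<and> (\<forall>i. R $ i $ i > 0) \<and> A = qr_Q A ** R"
proof -
  have "\<exists>!Q. \<exists>R. orthogonal_matrix Q \<and> upper_triangular R \<and> (\<forall>i. R $ i $ i > 0) \<and> A = Q ** R"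
    using qr_exists[OF inv] qr_unique by metis
  then show ?thesis unfolding qr_Q_def by (rule theI')
qed

lemma A_form:
  fixes S :: "real^('n::{finite,linorder})^('n::{finite,linorder})"
  assumes S: "S \<in> CC lam" and inj: "inj lam" and p: "\<forall>i. poly p (lam i) = f (lam i)"
  shows "\<exists>Q. orthogonal_matrix Q \<and> mpoly p S = Q ** diagm (\<lambda>i. f (lam i)) ** transpose Q \<and>
     transpose (mpoly p S) ** mpoly p S = Q ** diagm (\<lambda>i. f (lam i) ^ 2) ** transpose Q"
proof -
  obtain Q where Q: "orthogonal_matrix Q" "S = Q ** diagm lam ** transpose Q"
    using diagonalize[OF S inj] by blast
  have A: "mpoly p S = Q ** diagm (\<lambda>i. f (lam i)) ** transpose Q"
    using Q by (simp add: mpoly_conj mpoly_diag p)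
  have tdg: "transpose (diagm d) = diagm d" for d by (simp add: diagm_def transpose_def vec_eq_iff)
  have "transpose (mpoly p S) ** mpoly p S = Q ** diagm (\<lambda>i. f (lam i)) ** (transpose Q ** Q) ** diagm (\<lambda>i. f (lam i)) ** transpose Q"
    by (simp add: A matrix_transpose_mul tdg matrix_mul_assoc)
  also have "\<dots> = Q ** (diagm (\<lambda>i. f (lam i)) ** diagm (\<lambda>i. f (lam i))) ** transpose Q"
    using Q(1) by (simp add: orthogonal_matrix_def matrix_mul_assoc)
  also have "\<dots> = Q ** diagm (\<lambda>i. f (lam i) ^ 2) ** transpose Q"
    by (simp add: diagm_mul power2_eq_square)
  finally show ?thesis using A Q(1) by blast
qed

lemma diagm_one: "diagm (\<lambda>i. 1) = mat 1"
  by (simp add: diagm_def mat_def)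

lemma mpoly_invertible:
  fixes S :: "real^('n::{finite,linorder})^('n::{finite,linorder})"
  assumes S: "S \<in> CC lam" and inj: "inj lam" and p: "\<forall>i. poly p (lam i) = f (lam i)"
    and fnz: "\<And>i. f (lam i) \<noteq> 0"
  shows "invertible (mpoly p S)"
proof -
  obtain Q where Q: "orthogonal_matrix Q" "mpoly p S = Q ** diagm (\<lambda>i. f (lam i)) ** transpose Q"
    using A_form[OF S inj p] by blast
  have "mpoly p S ** (Q ** diagm (\<lambda>i. 1 / f (lam i)) ** transpose Q)
        = Q ** diagm (\<lambda>i. f (lam i)) ** (transpose Q ** Q) ** diagm (\<lambda>i. 1 / f (lam i)) ** transpose Q"
    by (simp add: Q(2) matrix_mul_assoc)
  also have "\<dots> = Q ** (diagm (\<lambda>i. f (lam i)) ** diagm (\<lambda>i. 1 / f (lam i))) ** transpose Q"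
    using Q(1) by (simp add: orthogonal_matrix_def matrix_mul_assoc)
  also have "\<dots> = mat 1"
    using Q(1) fnz by (simp add: diagm_mul diagm_one orthogonal_matrix_def)
  finally show ?thesis unfolding invertible_right_inverse by blast
qed

lemma step_props:
  fixes S :: "real^('n::{finite,linorder})^('n::{finite,linorder})"
  assumes S: "S \<in> CC lam" and inj: "inj lam" and p: "\<forall>i. poly p (lam i) = f (lam i)"
    and fnz: "\<And>i. f (lam i) \<noteq> 0"
  shows "\<exists>R. upper_triangular R \<and> transpose (mpoly p S) ** mpoly p S = transpose R ** R \<and>
     transpose (mpoly p (qr_step f S)) ** mpoly p (qr_step f S) = R ** transpose R \<and>
     qr_step f S \<in> CC lam"
proof -
  define A where "A = mpoly p S"
  obtain R where R: "orthogonal_matrix (qr_Q A)" "upper_triangular R" "A = qr_Q A ** R"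
    using qr_Q_prop[OF mpoly_invertible[OF S inj p fnz]] unfolding A_def by blast
  define Q where "Q = qr_Q A"
  have oQ: "orthogonal_matrix Q" using R by (simp add: Q_def)
  have AQR: "A = Q ** R" using R by (simp add: Q_def)
  have F: "qr_step f S = transpose Q ** S ** Q"
    unfolding qr_step_def Let_def mat_fun_mpoly[OF S inj p] Q_def A_def ..
  have S': "qr_step f S \<in> CC lam" using F CC_conj[OF S oQ] by simp
  have A': "mpoly p (qr_step f S) = R ** Q"
  proof -
    have "mpoly p (qr_step f S) = transpose Q ** A ** Q" by (simp add: F mpoly_conj'[OF oQ] A_def)
    also have "\<dots> = (transpose Q ** Q) ** R ** Q" by (simp add: AQR matrix_mul_assoc)
    also have "\<dots> = R ** Q" using oQ by (simp add: orthogonal_matrix_def)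
    finally show ?thesis .
  qed
  have symA': "transpose (mpoly p (qr_step f S)) = mpoly p (qr_step f S)"
    using S' by (simp add: transpose_mpoly CC_def)
  have B': "transpose (mpoly p (qr_step f S)) ** mpoly p (qr_step f S) = R ** transpose R"
  proof -
    have "transpose (mpoly p (qr_step f S)) ** mpoly p (qr_step f S)
          = mpoly p (qr_step f S) ** transpose (mpoly p (qr_step f S))" by (simp add: symA')
    also have "\<dots> = R ** (Q ** transpose Q) ** transpose R"
      by (simp add: A' matrix_transpose_mul matrix_mul_assoc)
    also have "\<dots> = R ** transpose R" using oQ by (simp add: orthogonal_matrix_def)
    finally show ?thesis .
  qed
  have B: "transpose A ** A = transpose R ** R"
  proof -
    have "transpose A ** A = transpose R ** (transpose Q ** Q) ** R"
      by (simp add: AQR matrix_transpose_mul matrix_mul_assoc)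
    also have "\<dots> = transpose R ** R" using oQ by (simp add: orthogonal_matrix_def)
    finally show ?thesis .
  qed
  show ?thesis using R(2) B B' S' unfolding A_def by blast
qed

definition wt :: "'n::{finite,linorder} \<Rightarrow> real" where
  "wt k = real (card {x. k < x})"

definition Vf :: "real^('n::{finite,linorder})^('n::{finite,linorder}) \<Rightarrow> real" where
  "Vf B = (\<Sum>k\<in>UNIV. wt k * B $ k $ k)"

definition Uf :: "real^('n::{finite,linorder})^('n::{finite,linorder}) \<Rightarrow> real" where
  "Uf R = (\<Sum>i\<in>UNIV. \<Sum>j\<in>UNIV. if i < j then (R $ i $ j)^2 else 0)"

lemma wt_mono: "(i::'n::{finite,linorder}) < j \<Longrightarrow> wt i - wt j \<ge> 1"
proof -
  assume ij: "i < j"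
  have "{x. j < x} \<subset> {x. i < x}" using ij by auto
  then have "card {x. j < x} < card {x. i < x}" by (intro psubset_card_mono) auto
  then show ?thesis by (simp add: wt_def)
qed

lemma gap:
  fixes R :: "real^('n::{finite,linorder})^('n::{finite,linorder})"
  assumes u: "upper_triangular R"
  shows "Vf (R ** transpose R) - Vf (transpose R ** R) \<ge> Uf R"
proof -
  have d1: "(R ** transpose R) $ k $ k = (\<Sum>j\<in>UNIV. (R $ k $ j)^2)" for k
    by (simp add: matrix_matrix_mult_def transpose_def power2_eq_square)
  have d2: "(transpose R ** R) $ k $ k = (\<Sum>i\<in>UNIV. (R $ i $ k)^2)" for k
    by (simp add: matrix_matrix_mult_def transpose_def power2_eq_square)
  have "Vf (R ** transpose R) - Vf (transpose R ** R)
      = (\<Sum>i\<in>UNIV. \<Sum>j\<in>UNIV. wt i * (R $ i $ j)^2) - (\<Sum>j\<in>UNIV. \<Sum>i\<in>UNIV. wt j * (R $ i $ j)^2)"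
    by (simp add: Vf_def d1 d2 sum_distrib_left)
  also have "\<dots> = (\<Sum>i\<in>UNIV. \<Sum>j\<in>UNIV. (wt i - wt j) * (R $ i $ j)^2)"
    by (subst sum.swap[of _ UNIV UNIV]) (simp add: sum_subtractf[symmetric] left_diff_distrib)
  also have "\<dots> \<ge> Uf R"
    unfolding Uf_def
  proof (intro sum_mono)
    fix i j :: 'n
    show "(if i < j then (R $ i $ j)^2 else 0) \<le> (wt i - wt j) * (R $ i $ j)^2"
    proof (cases i j rule: linorder_cases)
      case less
      then show ?thesis using wt_mono[OF less] mult_right_mono[of 1 "wt i - wt j" "(R $ i $ j)^2"] by simp
    next
      case greater
      then show ?thesis using u by (simp add: upper_triangular_def)
    qed simp
  qed
  finally show ?thesis .
qed

lemma Uf_nonneg: "Uf R \<ge> 0"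
  unfolding Uf_def by (intro sum_nonneg) auto

lemma Uf_entry: "(i::'n::{finite,linorder}) < j \<Longrightarrow> (R $ i $ j)^2 \<le> Uf R"
proof -
  assume ij: "i < j"
  have "(R $ i $ j)^2 = (if i < j then (R $ i $ j)^2 else 0)" using ij by simp
  also have "\<dots> \<le> (\<Sum>j'\<in>UNIV. if i < j' then (R $ i $ j')^2 else 0)"
    by (rule member_le_sum[where f="\<lambda>j'. if i < j' then (R $ i $ j')^2 else 0"]) auto
  also have "\<dots> \<le> Uf R"
    unfolding Uf_def
    by (rule member_le_sum[where f="\<lambda>i. \<Sum>j'\<in>UNIV. if i < j' then (R $ i $ j')^2 else 0"])
       (auto intro: sum_nonneg)
  finally show ?thesis .
qed

lemma offdiag_aux:
  fixes R :: "real^('n::{finite,linorder})^('n::{finite,linorder})"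
  assumes u: "upper_triangular R" and Mb: "\<forall>k. (transpose R ** R) $ k $ k \<le> Mb" and kl: "k < l"
  shows "\<bar>(transpose R ** R) $ k $ l\<bar> \<le> real CARD('n) * (sqrt Mb * sqrt (Uf R))"
proof -
  have dk: "(transpose R ** R) $ k $ k = (\<Sum>i\<in>UNIV. (R $ i $ k)^2)"
    by (simp add: matrix_matrix_mult_def transpose_def power2_eq_square)
  have "0 \<le> (\<Sum>i\<in>UNIV. (R $ i $ k)^2)" by (intro sum_nonneg) auto
  then have Mb0: "Mb \<ge> 0" using Mb[rule_format, of k] dk by linarith
  have trm: "\<bar>R $ i $ k * R $ i $ l\<bar> \<le> sqrt Mb * sqrt (Uf R)" for i
  proof (cases "R $ i $ k = 0")
    case True then show ?thesis using Mb0 Uf_nonneg[of R] by simp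
  next
    case False
    then have "\<not> k < i" using u by (auto simp: upper_triangular_def)
    then have il: "i < l" using kl by auto
    have "(R $ i $ k)^2 \<le> (\<Sum>i\<in>UNIV. (R $ i $ k)^2)" by (rule member_le_sum) auto
    then have "(R $ i $ k)^2 \<le> Mb" using Mb[rule_format, of k] dk by linarith
    then have a: "\<bar>R $ i $ k\<bar> \<le> sqrt Mb" by (simp add: real_le_rsqrt)
    have b: "\<bar>R $ i $ l\<bar> \<le> sqrt (Uf R)" using Uf_entry[OF il, of R] by (simp add: real_le_rsqrt)
    show ?thesis using mult_mono[OF a b] Mb0 by (simp add: abs_mult)
  qed
  have "\<bar>(transpose R ** R) $ k $ l\<bar> = \<bar>\<Sum>i\<in>UNIV. R $ i $ k * R $ i $ l\<bar>"
    by (simp add: matrix_matrix_mult_def transpose_def)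
  also have "\<dots> \<le> (\<Sum>i\<in>UNIV. \<bar>R $ i $ k * R $ i $ l\<bar>)" by (rule sum_abs)
  also have "\<dots> \<le> (\<Sum>i\<in>(UNIV::'n set). sqrt Mb * sqrt (Uf R))" by (intro sum_mono trm)
  also have "\<dots> = real CARD('n) * (sqrt Mb * sqrt (Uf R))" by simp
  finally show ?thesis .
qed


lemma offdiag_bound:
  fixes R :: "real^('n::{finite,linorder})^('n::{finite,linorder})"
  assumes u: "upper_triangular R" and Mb: "\<forall>k. (transpose R ** R) $ k $ k \<le> Mb" and kl: "k \<noteq> l"
  shows "\<bar>(transpose R ** R) $ k $ l\<bar> \<le> real CARD('n) * (sqrt Mb * sqrt (Uf R))"
proof (cases "k < l")
  case True then show ?thesis using offdiag_aux[OF u Mb] by blast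
next
  case False
  then have lk: "l < k" using kl by auto
  have "(transpose R ** R) $ k $ l = (transpose R ** R) $ l $ k"
    by (simp add: matrix_matrix_mult_def transpose_def mult.commute)
  then show ?thesis using offdiag_aux[OF u Mb lk] by simp
qed

lemma B_diag_bound:
  fixes S :: "real^('n::{finite,linorder})^('n::{finite,linorder})"
  assumes S: "S \<in> CC lam" and inj: "inj lam" and p: "\<forall>i. poly p (lam i) = f (lam i)"
  shows "0 \<le> (transpose (mpoly p S) ** mpoly p S) $ k $ k \<and>
         (transpose (mpoly p S) ** mpoly p S) $ k $ k \<le> (\<Sum>j\<in>UNIV. f (lam j) ^ 2)"
proof -
  obtain Q where Q: "orthogonal_matrix Q"
    "transpose (mpoly p S) ** mpoly p S = Q ** diagm (\<lambda>i. f (lam i) ^ 2) ** transpose Q"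
    using A_form[OF S inj p] by blast
  have QD: "(Q ** diagm d) $ k $ j = Q $ k $ j * d j" for d j
  proof -
    have "(\<Sum>m\<in>UNIV. Q $ k $ m * diagm d $ m $ j) = (\<Sum>m\<in>UNIV. if m = j then Q $ k $ j * d j else 0)"
      by (intro sum.cong) (auto simp: diagm_def)
    then show ?thesis by (simp add: matrix_matrix_mult_def)
  qed
  have e: "(transpose (mpoly p S) ** mpoly p S) $ k $ k = (\<Sum>j\<in>UNIV. (Q $ k $ j)^2 * f (lam j) ^ 2)"
  proof -
    have mt: "(X ** transpose Q) $ k $ l = (\<Sum>j\<in>UNIV. X $ k $ j * Q $ l $ j)" for X l
      by (simp add: matrix_matrix_mult_def transpose_def)
    show ?thesis unfolding Q(2) mt QD by (simp add: power2_eq_square mult_ac)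
  qed
  have rn: "(\<Sum>j\<in>UNIV. (Q $ k $ j)^2) = 1"
  proof -
    have "(Q ** transpose Q) $ k $ k = 1" using Q(1) by (simp add: orthogonal_matrix_def mat_def)
    then show ?thesis by (simp add: matrix_matrix_mult_def transpose_def power2_eq_square)
  qed
  have le1: "(Q $ k $ j)^2 \<le> 1" for j
    using rn member_le_sum[of j UNIV "\<lambda>j. (Q $ k $ j)^2"] by auto
  have "(\<Sum>j\<in>UNIV. (Q $ k $ j)^2 * f (lam j) ^ 2) \<le> (\<Sum>j\<in>UNIV. f (lam j) ^ 2)"
    by (intro sum_mono) (use le1 in \<open>auto intro: mult_left_le_one_le\<close>)
  moreover have "0 \<le> (\<Sum>j\<in>UNIV. (Q $ k $ j)^2 * f (lam j) ^ 2)" by (intro sum_nonneg) auto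
  ultimately show ?thesis using e by simp
qed

definition Bm :: "real poly \<Rightarrow> real^('n::{finite,linorder})^('n::{finite,linorder}) \<Rightarrow> real^('n::{finite,linorder})^('n::{finite,linorder})" where
  "Bm p S = transpose (mpoly p S) ** mpoly p S"

lemma step_gap:
  fixes S :: "real^('n::{finite,linorder})^('n::{finite,linorder})"
  assumes S: "S \<in> CC lam" and inj: "inj lam" and p: "\<forall>i. poly p (lam i) = f (lam i)"
    and fnz: "\<And>i. f (lam i) \<noteq> 0"
  shows "qr_step f S \<in> CC lam \<and> Vf (Bm p (qr_step f S)) - Vf (Bm p S) \<ge> 0 \<and>
    (\<forall>k l. k \<noteq> l \<longrightarrow> \<bar>Bm p S $ k $ l\<bar> \<le> real CARD('n) * (sqrt (\<Sum>j\<in>UNIV. f (lam j) ^ 2) *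
        sqrt (Vf (Bm p (qr_step f S)) - Vf (Bm p S))))"
proof -
  obtain R where R: "upper_triangular R" "Bm p S = transpose R ** R"
     "Bm p (qr_step f S) = R ** transpose R" "qr_step f S \<in> CC lam"
    using step_props[OF S inj p fnz] unfolding Bm_def by blast
  have g: "Vf (Bm p (qr_step f S)) - Vf (Bm p S) \<ge> Uf R" using gap[OF R(1)] R by simp
  have Mb: "\<forall>k. (transpose R ** R) $ k $ k \<le> (\<Sum>j\<in>UNIV. f (lam j) ^ 2)"
    using B_diag_bound[OF S inj p] R(2) unfolding Bm_def by metis
  have "\<bar>Bm p S $ k $ l\<bar> \<le> real CARD('n) * (sqrt (\<Sum>j\<in>UNIV. f (lam j) ^ 2) *
        sqrt (Vf (Bm p (qr_step f S)) - Vf (Bm p S)))" if kl: "k \<noteq> l" for k l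
  proof -
    have "\<bar>Bm p S $ k $ l\<bar> \<le> real CARD('n) * (sqrt (\<Sum>j\<in>UNIV. f (lam j) ^ 2) * sqrt (Uf R))"
      using offdiag_bound[OF R(1) Mb kl] R(2) by simp
    also have "\<dots> \<le> real CARD('n) * (sqrt (\<Sum>j\<in>UNIV. f (lam j) ^ 2) *
        sqrt (Vf (Bm p (qr_step f S)) - Vf (Bm p S)))"
      using g by (intro mult_left_mono real_sqrt_le_mono) (auto intro: sum_nonneg)
    finally show ?thesis .
  qed
  then show ?thesis using R(4) g Uf_nonneg[of R] by auto
qed

lemma V_bounds:
  fixes S :: "real^('n::{finite,linorder})^('n::{finite,linorder})"
  assumes S: "S \<in> CC lam" and inj: "inj lam" and p: "\<forall>i. poly p (lam i) = f (lam i)"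
  shows "0 \<le> Vf (Bm p S) \<and> Vf (Bm p S) \<le> (\<Sum>k\<in>(UNIV::'n set). wt k * (\<Sum>j\<in>UNIV. f (lam j) ^ 2))"
proof -
  have w: "wt k \<ge> 0" for k :: 'n by (simp add: wt_def)
  have b: "0 \<le> Bm p S $ k $ k \<and> Bm p S $ k $ k \<le> (\<Sum>j\<in>UNIV. f (lam j) ^ 2)" for k
    using B_diag_bound[OF S inj p] unfolding Bm_def by blast
  have "(\<Sum>k\<in>UNIV. wt k * Bm p S $ k $ k) \<le> (\<Sum>k\<in>(UNIV::'n set). wt k * (\<Sum>j\<in>UNIV. f (lam j) ^ 2))"
    by (rule sum_mono) (use w b in \<open>auto intro: mult_left_mono\<close>)
  moreover have "0 \<le> (\<Sum>k\<in>UNIV. wt k * Bm p S $ k $ k)"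
    by (rule sum_nonneg) (use w b in auto)
  ultimately show ?thesis unfolding Vf_def by simp
qed

lemma tendsto_transpose:
  fixes X :: "'a \<Rightarrow> real^'n::finite^'m::finite"
  assumes "(X \<longlongrightarrow> X0) F"
  shows "((\<lambda>x. transpose (X x)) \<longlongrightarrow> transpose X0) F"
  unfolding transpose_def by (intro tendsto_vec_lambda tendsto_vec_nth assms)

lemma count_bound:
  fixes A :: "nat set"
  assumes "\<And>k. card {j\<in>A. j < k} \<le> N"
  shows "finite A \<and> card A \<le> N"
proof -
  have fin: "finite A"
  proof (rule ccontr)
    assume "infinite A"
    then obtain B where B: "finite B" "card B = Suc N" "B \<subseteq> A"
      using infinite_arbitrarily_large by blast
    obtain k where k: "\<forall>x\<in>B. x < k" using finite_nat_bounded[OF B(1)] by auto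
    have "B \<subseteq> {j\<in>A. j < k}" using B k by auto
    then have "card B \<le> card {j\<in>A. j < k}" by (intro card_mono) auto
    with assms[of k] B(2) show False by simp
  qed
  obtain k where k: "\<forall>x\<in>A. x < k" using finite_nat_bounded[OF fin] by auto
  have "{j\<in>A. j < k} = A" using k by auto
  with assms[of k] fin show ?thesis by simp
qed

theorem corollary2p8:
  fixes lam :: "'n::{finite,linorder} \<Rightarrow> real"
    and f :: "real \<Rightarrow> real"
    and K :: "(real^('n::{finite,linorder})^('n::{finite,linorder})) set"
  assumes lam_mono: "strict_mono lam"
    and f_nz: "\<And>i. f (lam i) \<noteq> 0"
    and f_abs: "\<And>i j. i \<noteq> j \<Longrightarrow> \<bar>f (lam i)\<bar> \<noteq> \<bar>f (lam j)\<bar>"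
    and K_sub: "K \<subseteq> T_Lambda lam"
    and K_compact: "compact K"
    and K_nodiag: "\<And>T. T \<in> K \<Longrightarrow> \<not> is_diag_mat T"
  shows "\<exists>B::nat. B > 0 \<and> (\<forall>T \<in> T_Lambda lam.
           finite {k::nat. (qr_step f ^^ k) T \<in> K} \<and>
           card {k::nat. (qr_step f ^^ k) T \<in> K} < B)"
proof -
  have inj: "inj lam" using lam_mono by (rule strict_mono_imp_inj_on)
  obtain p where p: "\<forall>i. poly p (lam i) = f (lam i)" using interp_exists[OF inj] by blast
  have TC: "T_Lambda lam \<subseteq> CC lam" by (auto simp: T_Lambda_def CC_def)
  have KC: "K \<subseteq> CC lam" using K_sub TC by blast
  define V where "V (S::real^('n::{finite,linorder})^('n::{finite,linorder})) = Vf (Bm p S)" for S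
  define gp where "gp (S::real^('n::{finite,linorder})^('n::{finite,linorder})) = V (qr_step f S) - V S" for S
  define Mb where "Mb = (\<Sum>j\<in>UNIV. f (lam j) ^ 2)"
  define c where "c = real CARD('n) * sqrt Mb"
  define Vmax where "Vmax = (\<Sum>k\<in>(UNIV::'n set). wt k * Mb)"
  have SG: "qr_step f S \<in> CC lam \<and> gp S \<ge> 0 \<and> (\<forall>k l. k \<noteq> l \<longrightarrow> \<bar>Bm p S $ k $ l\<bar> \<le> c * sqrt (gp S))"
    if "S \<in> CC lam" for S
    using step_gap[OF that inj p f_nz] by (simp add: gp_def V_def c_def Mb_def mult.assoc)
  have VB: "0 \<le> V S \<and> V S \<le> Vmax" if "S \<in> CC lam" for S
    using V_bounds[OF that inj p] by (simp add: V_def Vmax_def Mb_def)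
  have c0: "c \<ge> 0" by (simp add: c_def Mb_def sum_nonneg)
  have "\<exists>\<delta>>0. \<forall>S\<in>K. gp S \<ge> \<delta>"
  proof (rule ccontr)
    assume na: "\<not> (\<exists>\<delta>>0. \<forall>S\<in>K. gp S \<ge> \<delta>)"
    have "\<exists>S\<in>K. gp S < inverse (real (Suc m))" for m
    proof -
      have "inverse (real (Suc m)) > 0" by simp
      then show ?thesis using na by (meson not_le)
    qed
    then obtain Sm where Sm: "\<And>m. Sm m \<in> K" "\<And>m. gp (Sm m) < inverse (real (Suc m))" by metis
    from K_compact have "seq_compact K" by (rule compact_imp_seq_compact)
    then obtain l r where l: "l \<in> K" "strict_mono r" "(Sm \<circ> r) \<longlonglongrightarrow> l"
      using Sm(1) unfolding seq_compact_def by metis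
    have l3: "(\<lambda>m. Sm (r m)) \<longlonglongrightarrow> l" using l(3) by (simp add: o_def)
    have lim: "(\<lambda>m. Bm p (Sm (r m))) \<longlonglongrightarrow> Bm p l"
      unfolding Bm_def by (intro tendsto_matmul tendsto_transpose tendsto_mpoly l3)
    have "is_diag_mat (Bm p l)"
      unfolding is_diag_mat_def
    proof (intro allI impI)
      fix k l' :: 'n assume kl: "k \<noteq> l'"
      have t1: "(\<lambda>m. Bm p (Sm (r m)) $ k $ l') \<longlonglongrightarrow> Bm p l $ k $ l'"
        by (intro tendsto_vec_nth lim)
      have z: "(\<lambda>m. c * sqrt (inverse (real (Suc (r m))))) \<longlonglongrightarrow> 0"
      proof -
        have "(\<lambda>m. inverse (real (Suc (r m)))) \<longlonglongrightarrow> 0"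
          using LIMSEQ_subseq_LIMSEQ[OF LIMSEQ_inverse_real_of_nat l(2)] by (simp add: o_def)
        then have "(\<lambda>m. sqrt (inverse (real (Suc (r m))))) \<longlonglongrightarrow> sqrt 0"
          by (intro tendsto_real_sqrt)
        then show ?thesis by (intro tendsto_mult_right_zero) simp
      qed
      have bnd: "norm (Bm p (Sm (r m)) $ k $ l') \<le> c * sqrt (inverse (real (Suc (r m))))" for m
      proof -
        have SmC: "Sm (r m) \<in> CC lam" using Sm(1) KC by blast
        have "\<bar>Bm p (Sm (r m)) $ k $ l'\<bar> \<le> c * sqrt (gp (Sm (r m)))" using SG[OF SmC] kl by blast
        also have "\<dots> \<le> c * sqrt (inverse (real (Suc (r m))))"
          using Sm(2)[of "r m"] c0 by (intro mult_left_mono real_sqrt_le_mono) auto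
        finally show ?thesis by simp
      qed
      have "(\<lambda>m. Bm p (Sm (r m)) $ k $ l') \<longlonglongrightarrow> 0"
        by (rule Lim_null_comparison[OF always_eventually z]) (use bnd in auto)
      then show "Bm p l $ k $ l' = 0" using t1 LIMSEQ_unique by blast
    qed
    then have "is_diag_mat l" using diag_lemma[OF _ inj p f_abs] l(1) KC unfolding Bm_def by blast
    then show False using K_nodiag l(1) by blast
  qed
  then obtain \<delta> where \<delta>: "\<delta> > 0" "\<And>S. S \<in> K \<Longrightarrow> gp S \<ge> \<delta>" by blast
  define N where "N = nat \<lfloor>Vmax / \<delta>\<rfloor>"
  have main: "finite {k::nat. (qr_step f ^^ k) T \<in> K} \<and> card {k::nat. (qr_step f ^^ k) T \<in> K} < Suc N"
    if T: "T \<in> T_Lambda lam" for T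
  proof -
    define s where "s k = (qr_step f ^^ k) T" for k
    have sC: "s k \<in> CC lam" for k
    proof (induction k)
      case 0 then show ?case using T TC by (auto simp: s_def)
    next
      case (Suc k) then show ?case using SG by (simp add: s_def)
    qed
    have grow: "V (s k) \<ge> V (s 0) + \<delta> * real (card {j. j < k \<and> s j \<in> K})" for k
    proof (induction k)
      case 0 then show ?case by simp
    next
      case (Suc k)
      have step: "V (s (Suc k)) = V (s k) + gp (s k)" by (simp add: gp_def s_def)
      have gp0: "gp (s k) \<ge> 0" using SG[OF sC[of k]] by blast
      show ?case
      proof (cases "s k \<in> K")
        case True
        have "{j. j < Suc k \<and> s j \<in> K} = insert k {j. j < k \<and> s j \<in> K}" using True by auto
        then have "card {j. j < Suc k \<and> s j \<in> K} = Suc (card {j. j < k \<and> s j \<in> K})" by simp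
        moreover have "gp (s k) \<ge> \<delta>" using \<delta>(2) True by blast
        ultimately show ?thesis using Suc step by (simp add: algebra_simps)
      next
        case False
        have "{j. j < Suc k \<and> s j \<in> K} = {j. j < k \<and> s j \<in> K}" using False less_Suc_eq by auto
        with Suc step gp0 show ?thesis by simp
      qed
    qed
    have cb: "card {j \<in> {k. s k \<in> K}. j < k} \<le> N" for k
    proof -
      have "\<delta> * real (card {j. j < k \<and> s j \<in> K}) \<le> Vmax"
        using grow[of k] VB[OF sC[of k]] VB[OF sC[of 0]] by linarith
      then have "real (card {j. j < k \<and> s j \<in> K}) \<le> Vmax / \<delta>" using \<delta>(1) by (simp add: field_simps)
      then have "card {j. j < k \<and> s j \<in> K} \<le> N" unfolding N_def by (rule le_nat_floor)
      moreover have "{j \<in> {k. s k \<in> K}. j < k} = {j. j < k \<and> s j \<in> K}" by auto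
      ultimately show ?thesis by simp
    qed
    from count_bound[OF cb] show ?thesis by (simp add: s_def)
  qed
  show ?thesis by (intro exI[of _ "Suc N"]) (use main in auto)
qed

end
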